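(* Let $q$ be a prime power, $m\ge2$, $1\le k<n$, and let $X\in \mathbb{F}_{q^m}^{k\times (n-k)}$ be chosen uniformly at random. Then $$\Pr\big(\mathrm{rs}[\,I_k\mid X\,] \text{ is a generalized Gabidulin code}\big)\leq \phi(m)\,q^{-(m-1)(n-k-1)(k-1)},$$ where $\phi$ is Euler's totient function.
   Context: $\mathrm{rs}$ denotes $\mathbb{F}_{q^m}$-row space. For $s$ coprime to $m$ and $g_1,\dots,g_n\in\mathbb{F}_{q^m}$ linearly independent over $\mathbb{F}_q$, the generalized Gabidulin code of dimension $k$ with parameter $s$ is the row space of the $k\times n$ matrix with $(i,j)$ entry $g_j^{q^{s(i-1)}}$; a generalized Gabidulin code is such a code for some such $s$ and $g_1,\dots,g_n$. *)

theory Defs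
  imports Main "HOL-Number_Theory.Totient"
begin

text \<open>Vectors of length n over a field are functions nat => 'a (only indices < n matter,
  entries outside are normalised to 0); k x n matrices are functions nat => nat => 'a.\<close>

definition prime_power :: "nat \<Rightarrow> bool" where
  "prime_power q \<longleftrightarrow> (\<exists>p r. prime p \<and> r > 0 \<and> q = p ^ r)"

definition subfield_Fq :: "nat \<Rightarrow> 'a::field set" where
  "subfield_Fq q = {x. x ^ q = x}"

definition Fq_lin_indep :: "nat \<Rightarrow> nat \<Rightarrow> (nat \<Rightarrow> 'a::field) \<Rightarrow> bool" where
  "Fq_lin_indep q n g \<longleftrightarrow>
     (\<forall>c. (\<forall>j<n. c j \<in> subfield_Fq q) \<longrightarrow> (\<Sum>j<n. c j * g j) = 0 \<longrightarrow> (\<forall>j<n. c j = 0))"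

definition row_space :: "nat \<Rightarrow> nat \<Rightarrow> (nat \<Rightarrow> nat \<Rightarrow> 'a::field) \<Rightarrow> (nat \<Rightarrow> 'a) set" where
  "row_space k n M = {(\<lambda>j. if j < n then (\<Sum>i<k. u i * M i j) else 0) | u. True}"

definition gab_matrix :: "nat \<Rightarrow> nat \<Rightarrow> (nat \<Rightarrow> 'a::field) \<Rightarrow> nat \<Rightarrow> nat \<Rightarrow> 'a" where
  "gab_matrix q s g i j = g j ^ (q ^ (s * i))"

definition is_gen_gabidulin :: "nat \<Rightarrow> nat \<Rightarrow> nat \<Rightarrow> (nat \<Rightarrow> 'a::field) set \<Rightarrow> bool" where
  "is_gen_gabidulin q m n C \<longleftrightarrow>
     (\<exists>k' s g. coprime s m \<and> Fq_lin_indep q n g \<and> C = row_space k' n (gab_matrix q s g))"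

definition sys_matrix :: "nat \<Rightarrow> (nat \<Rightarrow> nat \<Rightarrow> 'a::field) \<Rightarrow> nat \<Rightarrow> nat \<Rightarrow> 'a" where
  "sys_matrix k X i j = (if j < k then (if i = j then 1 else 0) else X i (j - k))"

definition matrices :: "nat \<Rightarrow> nat \<Rightarrow> (nat \<Rightarrow> nat \<Rightarrow> 'a::zero) set" where
  "matrices k l = {X. \<forall>i j. (k \<le> i \<or> l \<le> j) \<longrightarrow> X i j = 0}"

end

theory Submission
  imports Defs "HOL-Library.FuncSet"
begin

lemma fin_field_pow_card:
  fixes x :: "'a::{finite,field}"
  shows "x ^ card (UNIV :: 'a set) = x"
proof (cases "x = 0")
  case True
  have "card (UNIV :: 'a set) > 0" by (simp add: card_gt_0_iff)
  then show ?thesis using True by (simp add: zero_power)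
next
  case False
  let ?A = "UNIV - {0::'a}"
  have inj: "inj_on (\<lambda>y. x * y) ?A" using False by (auto simp: inj_on_def)
  have im: "(\<lambda>y. x * y) ` ?A = ?A"
  proof
    show "(\<lambda>y. x * y) ` ?A \<subseteq> ?A" using False by auto
    show "?A \<subseteq> (\<lambda>y. x * y) ` ?A"
    proof
      fix z assume "z \<in> ?A"
      then have "z = x * (z / x)" "z / x \<in> ?A" using False by auto
      then show "z \<in> (\<lambda>y. x * y) ` ?A" by blast
    qed
  qed
  have "prod (\<lambda>y. y) ?A = prod (\<lambda>y. x * y) ?A"
    using prod.reindex[OF inj, of "\<lambda>y. y"] im by simp
  also have "\<dots> = x ^ card ?A * prod (\<lambda>y. y) ?A"
    by (simp add: prod.distrib)
  finally have e: "prod (\<lambda>y. y) ?A = x ^ card ?A * prod (\<lambda>y. y) ?A" .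
  have nz: "prod (\<lambda>y. y) ?A \<noteq> 0" by simp
  have "x ^ card ?A = 1" using e nz
    by (metis mult_cancel_right1)
  moreover have "card ?A = card (UNIV :: 'a set) - 1" by (simp add: card_Diff_singleton)
  moreover have "card (UNIV :: 'a set) > 0" by (simp add: card_gt_0_iff)
  ultimately have "card (UNIV :: 'a set) = Suc (card ?A)" "x ^ card ?A = 1" by auto
  then show ?thesis by (metis power_Suc mult.right_neutral)
qed

lemma frob_mt:
  fixes x :: "'a::{finite,field}"
  assumes "card (UNIV :: 'a set) = q ^ m"
  shows "x ^ (q ^ (m * t)) = x"
proof (induction t)
  case 0 then show ?case by simp
next
  case (Suc t)
  have "x ^ (q ^ (m * Suc t)) = (x ^ (q ^ (m * t))) ^ (q ^ m)"
    by (simp add: power_add power_mult[symmetric] mult.commute)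
  also have "\<dots> = x" using Suc fin_field_pow_card[of x] assms by simp
  finally show ?case .
qed

lemma frob_mod:
  fixes x :: "'a::{finite,field}"
  assumes "card (UNIV :: 'a set) = q ^ m"
  shows "x ^ (q ^ a) = x ^ (q ^ (a mod m))"
proof -
  have "a = m * (a div m) + a mod m" by simp
  then have "x ^ (q ^ a) = (x ^ (q ^ (m * (a div m)))) ^ (q ^ (a mod m))"
    by (metis power_add power_mult)
  then show ?thesis using frob_mt[OF assms] by simp
qed

lemma gab_mod:
  assumes "card (UNIV :: 'a::{finite,field} set) = q ^ m"
  shows "gab_matrix q s (g :: nat \<Rightarrow> 'a) = gab_matrix q (s mod m) g"
proof (intro ext)
  fix i j
  have "(s * i) mod m = ((s mod m) * i) mod m" by (simp add: mod_mult_left_eq)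
  then show "gab_matrix q s g i j = gab_matrix q (s mod m) g i j"
    unfolding gab_matrix_def using frob_mod[OF assms, of "g j"] by metis
qed

lemma row_space_scale:
  assumes "\<And>i. d i \<noteq> (0::'a::field)"
  shows "row_space k n (\<lambda>i j. d i * M i j) = row_space k n M"
proof
  show "row_space k n (\<lambda>i j. d i * M i j) \<subseteq> row_space k n M"
  proof
    fix v assume "v \<in> row_space k n (\<lambda>i j. d i * M i j)"
    then obtain u where v: "v = (\<lambda>j. if j < n then (\<Sum>i<k. u i * (d i * M i j)) else 0)"
      unfolding row_space_def by blast
    have "v = (\<lambda>j. if j < n then (\<Sum>i<k. (u i * d i) * M i j) else 0)"
      unfolding v by (rule ext) (simp add: mult.assoc)
    then show "v \<in> row_space k n M" unfolding row_space_def
      by (intro CollectI exI[of _ "\<lambda>i. u i * d i"]) simp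
  qed
  show "row_space k n M \<subseteq> row_space k n (\<lambda>i j. d i * M i j)"
  proof
    fix v assume "v \<in> row_space k n M"
    then obtain u where v: "v = (\<lambda>j. if j < n then (\<Sum>i<k. u i * M i j) else 0)"
      unfolding row_space_def by blast
    have e: "\<And>i j. (u i / d i) * (d i * M i j) = u i * M i j"
      using assms by (simp add: field_simps)
    have "v = (\<lambda>j. if j < n then (\<Sum>i<k. (u i / d i) * (d i * M i j)) else 0)"
      unfolding v e by (rule refl)
    then show "v \<in> row_space k n (\<lambda>i j. d i * M i j)" unfolding row_space_def
      by (intro CollectI exI[of _ "\<lambda>i. u i / d i"]) simp
  qed
qed

lemma row_space_cong:
  assumes "\<And>i j. j < n \<Longrightarrow> M i j = M' i j"
  shows "row_space k n M = row_space k n M'"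
  unfolding row_space_def using assms by (auto intro!: ext)

lemma row_space_mono:
  assumes "k1 \<le> k2"
  shows "row_space k1 n M \<subseteq> row_space k2 n M"
proof
  fix v assume "v \<in> row_space k1 n M"
  then obtain u where v: "v = (\<lambda>j. if j < n then (\<Sum>i<k1. u i * M i j) else 0)"
    unfolding row_space_def by blast
  let ?u = "\<lambda>i. if i < k1 then u i else 0"
  have "\<And>j. (\<Sum>i<k2. ?u i * M i j) = (\<Sum>i<k1. u i * M i j)"
  proof -
    fix j
    have "(\<Sum>i<k2. ?u i * M i j) = (\<Sum>i\<in>{..<k1}. ?u i * M i j)"
      using assms by (intro sum.mono_neutral_right) auto
    then show "(\<Sum>i<k2. ?u i * M i j) = (\<Sum>i<k1. u i * M i j)" by simp
  qed
  note S = this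
  have "v = (\<lambda>j. if j < n then (\<Sum>i<k2. ?u i * M i j) else 0)" unfolding v S by (rule refl)
  then show "v \<in> row_space k2 n M" unfolding row_space_def
    by (intro CollectI exI[of _ ?u]) simp
qed

lemma sum_delta_mul:
  assumes "i < (k::nat)"
  shows "(\<Sum>i'<k. (if i' = i then 1 else 0) * (f i' :: 'a::comm_ring_1)) = f i"
proof -
  have "(\<Sum>i'<k. (if i' = i then 1 else 0) * f i') = (\<Sum>i'<k. if i' = i then f i' else 0)"
    by (rule sum.cong) auto
  then show ?thesis using assms by (simp add: sum.delta)
qed

lemma sum_delta_mul2:
  assumes "i < (k::nat)"
  shows "(\<Sum>i'<k. (w i' :: 'a::comm_ring_1) * (if i' = i then 1 else 0)) = w i"
proof -
  have "(\<Sum>i'<k. w i' * (if i' = i then 1 else 0)) = (\<Sum>i'<k. if i' = i then w i' else 0)"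
    by (rule sum.cong) auto
  then show ?thesis using assms by (simp add: sum.delta)
qed

lemma sys_unique:
  assumes X: "X \<in> matrices k (n - k)" and Y: "Y \<in> matrices k (n - k)"
    and kn: "k < n"
    and sub: "row_space k n (sys_matrix k X) \<subseteq> row_space k n (sys_matrix k Y)"
  shows "X = Y"
proof (intro ext)
  fix i j
  show "X i j = Y i j"
  proof (cases "i < k \<and> j < n - k")
    case False
    then show ?thesis using X Y unfolding matrices_def by auto
  next
    case True
    let ?v = "\<lambda>jj. if jj < n then (\<Sum>i'<k. (if i' = i then 1 else 0) * sys_matrix k X i' jj) else 0"
    have "?v \<in> row_space k n (sys_matrix k X)" unfolding row_space_def
      by (intro CollectI exI[of _ "\<lambda>i'. if i' = i then 1 else 0"]) simp
    then have "?v \<in> row_space k n (sys_matrix k Y)" using sub by blast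
    then obtain w where w: "?v = (\<lambda>jj. if jj < n then (\<Sum>i'<k. w i' * sys_matrix k Y i' jj) else 0)"
      unfolding row_space_def by blast
    have vv: "\<And>jj. jj < n \<Longrightarrow> sys_matrix k X i jj = (\<Sum>i'<k. w i' * sys_matrix k Y i' jj)"
    proof -
      fix jj assume "jj < n"
      have "(\<Sum>i'<k. (if i' = i then 1 else 0) * sys_matrix k X i' jj) = sys_matrix k X i jj"
        using True by (simp add: sum_delta_mul)
      then show "sys_matrix k X i jj = (\<Sum>i'<k. w i' * sys_matrix k Y i' jj)"
        using fun_cong[OF w, of jj] \<open>jj < n\<close> by simp
    qed
    have wd: "\<And>i'. i' < k \<Longrightarrow> w i' = (if i' = i then 1 else 0)"
    proof -
      fix i' assume "i' < k"
      have "(\<Sum>i''<k. w i'' * sys_matrix k Y i'' i') = w i'"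
        using \<open>i' < k\<close> by (simp add: sys_matrix_def sum_delta_mul2)
      then show "w i' = (if i' = i then 1 else 0)"
        using vv[of i'] \<open>i' < k\<close> kn by (auto simp: sys_matrix_def)
    qed
    have "X i j = sys_matrix k X i (j + k)" by (simp add: sys_matrix_def)
    also have "\<dots> = (\<Sum>i'<k. w i' * sys_matrix k Y i' (j + k))"
    proof -
      have "j + k < n" using True by linarith
      then show ?thesis by (rule vv)
    qed
    also have "\<dots> = (\<Sum>i'<k. (if i' = i then 1 else 0) * sys_matrix k Y i' (j + k))"
      using wd by (intro sum.cong) auto
    also have "\<dots> = sys_matrix k Y i (j + k)"
      using True by (simp add: sum_delta_mul)
    also have "\<dots> = Y i j" by (simp add: sys_matrix_def)
    finally show ?thesis .
  qed
qed

lemma card_matrices: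
  "card (matrices k l :: (nat \<Rightarrow> nat \<Rightarrow> 'a::{finite,zero}) set) = card (UNIV :: 'a set) ^ (k * l)"
proof -
  let ?A = "{..<k} \<times> {..<l}"
  let ?f = "\<lambda>X::nat \<Rightarrow> nat \<Rightarrow> 'a. restrict (\<lambda>(i,j). X i j) ?A"
  let ?g = "\<lambda>f. (\<lambda>i j. if i < k \<and> j < l then f (i,j) else (0::'a))"
  have "bij_betw ?f (matrices k l) (PiE ?A (\<lambda>_. UNIV))"
  proof (rule bij_betw_byWitness[where f' = ?g])
    show "\<forall>a\<in>matrices k l. ?g (?f a) = a"
      by (auto simp: matrices_def intro!: ext)
    show "\<forall>a'\<in>PiE ?A (\<lambda>_. UNIV). ?f (?g a') = a'"
      by (auto simp: PiE_def extensional_def restrict_def intro!: ext)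
    show "?f ` matrices k l \<subseteq> PiE ?A (\<lambda>_. UNIV)" by (simp add: image_subset_iff)
    show "?g ` PiE ?A (\<lambda>_. UNIV) \<subseteq> matrices k l" by (auto simp: matrices_def)
  qed
  then have "card (matrices k l :: (nat \<Rightarrow> nat \<Rightarrow> 'a) set) = card (PiE ?A (\<lambda>_. (UNIV :: 'a set)))"
    by (rule bij_betw_same_card)
  also have "\<dots> = card (UNIV :: 'a set) ^ (k * l)"
    by (simp add: card_PiE card_cartesian_product)
  finally show ?thesis .
qed

lemma lin_indep_g0:
  assumes "Fq_lin_indep q n (g :: nat \<Rightarrow> 'a::field)" "q > 0" "n > 0"
  shows "g 0 \<noteq> 0"
proof
  assume g0: "g 0 = 0"
  let ?c = "\<lambda>j. if j = 0 then (1::'a) else 0"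
  have "\<forall>j<n. ?c j \<in> subfield_Fq q" using assms(2) by (simp add: subfield_Fq_def zero_power)
  moreover have "(\<Sum>j<n. ?c j * g j) = 0"
  proof -
    have "(\<Sum>j<n. ?c j * g j) = (\<Sum>j<n. if j = 0 then g j else 0)" by (rule sum.cong) auto
    also have "\<dots> = 0" using g0 assms(3) by (simp add: sum.delta)
    finally show ?thesis .
  qed
  moreover note spec[OF assms(1)[unfolded Fq_lin_indep_def], of ?c]
  ultimately have "\<forall>j<n. ?c j = 0" by blast
  then show False using assms(3) by auto
qed

definition gnorm :: "(nat \<Rightarrow> 'a) \<Rightarrow> nat \<Rightarrow> 'a::field" where
  "gnorm h j = (if j = 0 then 1 else h j)"

lemma gab_normal:
  assumes card: "card (UNIV :: 'a::{finite,field} set) = q ^ m"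
    and "q > 0" "n > 0" and li: "Fq_lin_indep q n (g :: nat \<Rightarrow> 'a)"
  shows "row_space kk n (gab_matrix q s g)
       = row_space kk n (gab_matrix q (s mod m) (gnorm (restrict (\<lambda>j. g j / g 0) {1..<n})))"
proof -
  have g0: "g 0 \<noteq> 0" using lin_indep_g0[OF li assms(2,3)] .
  let ?g' = "\<lambda>j. g j / g 0"
  have "gab_matrix q s g = (\<lambda>i j. (g 0 ^ (q ^ (s * i))) * gab_matrix q s ?g' i j)"
  proof (intro ext)
    fix i j
    have "g j ^ (q ^ (s * i)) = (g 0 * ?g' j) ^ (q ^ (s * i))" using g0 by simp
    also have "\<dots> = (g 0 ^ (q ^ (s * i))) * ?g' j ^ (q ^ (s * i))" by (rule power_mult_distrib)
    finally show "gab_matrix q s g i j = (g 0 ^ (q ^ (s * i))) * gab_matrix q s ?g' i j"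
      unfolding gab_matrix_def .
  qed
  moreover have "row_space kk n (\<lambda>i j. (g 0 ^ (q ^ (s * i))) * gab_matrix q s ?g' i j) = row_space kk n (gab_matrix q s ?g')"
    by (rule row_space_scale) (use g0 in simp)
  ultimately have "row_space kk n (gab_matrix q s g) = row_space kk n (gab_matrix q s ?g')"
    by (simp only:)
  also have "\<dots> = row_space kk n (gab_matrix q (s mod m) ?g')"
    using gab_mod[OF card, of s ?g'] by (simp only:)
  also have "\<dots> = row_space kk n (gab_matrix q (s mod m) (gnorm (restrict ?g' {1..<n})))"
    by (rule row_space_cong) (use g0 in \<open>auto simp: gab_matrix_def gnorm_def\<close>)
  finally show ?thesis .
qed

lemma exp_ineq:
  fixes m k n :: nat
  assumes "1 \<le> k" "k < n"
  shows "m * (n - 1) + (m - 1) * (n - k - 1) * (k - 1) \<le> m * k * (n - k)"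
proof -
  obtain a where a: "k = a + 1" using assms(1) by (metis add.commute le_Suc_ex plus_1_eq_Suc)
  obtain b where b: "n - k = b + 1" using assms(2) by (metis Suc_diff_Suc add.commute plus_1_eq_Suc)
  have n1: "n - 1 = a + b + 1" using a b assms by linarith
  have "(m - 1) * b * a \<le> m * b * a" by (intro mult_right_mono) auto
  then show ?thesis unfolding n1 using a b by (simp add: algebra_simps)
qed

theorem theorem4p11:
  fixes q m k n :: nat
  assumes "prime_power q" and "card (UNIV :: 'a set) = q ^ m"
    and "m \<ge> 2" and "1 \<le> k" and "k < n"
  shows "real (card {X \<in> (matrices k (n - k) :: (nat \<Rightarrow> nat \<Rightarrow> 'a::{finite,field}) set).
                      is_gen_gabidulin q m n (row_space k n (sys_matrix k X))})
         / real (card (matrices k (n - k) :: (nat \<Rightarrow> nat \<Rightarrow> 'a) set))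
       \<le> real (totient m) / real q ^ ((m - 1) * (n - k - 1) * (k - 1))"
proof -
  define S where "S = {X \<in> (matrices k (n - k) :: (nat \<Rightarrow> nat \<Rightarrow> 'a) set).
                      is_gen_gabidulin q m n (row_space k n (sys_matrix k X))}"
  define Q where "Q = card (UNIV :: 'a set)"
  have q2: "q \<ge> 2"
  proof -
    obtain p r where "prime p" "r > 0" "q = p ^ r" using assms(1) unfolding prime_power_def by blast
    moreover have "p \<ge> 2" using \<open>prime p\<close> by (rule prime_ge_2_nat)
    moreover have "p \<le> p ^ r" using \<open>r > 0\<close> \<open>p \<ge> 2\<close> by (simp add: self_le_power)
    ultimately show ?thesis by linarith
  qed
  have m0: "m > 0" and n0: "n > 0" using assms by auto
  have "\<forall>X\<in>S. \<exists>t. coprime (fst (snd t)) m \<and> Fq_lin_indep q n (snd (snd t))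
      \<and> row_space k n (sys_matrix k X) = row_space (fst t) n (gab_matrix q (fst (snd t)) (snd (snd t)))"
    unfolding S_def is_gen_gabidulin_def by force
  then obtain T where T: "\<And>X. X \<in> S \<Longrightarrow> coprime (fst (snd (T X))) m \<and> Fq_lin_indep q n (snd (snd (T X)))
      \<and> row_space k n (sys_matrix k X) = row_space (fst (T X)) n (gab_matrix q (fst (snd (T X))) (snd (snd (T X))))"
    using bchoice by metis
  define key where "key X = (fst (snd (T X)) mod m,
        restrict (\<lambda>j. snd (snd (T X)) j / snd (snd (T X)) 0) {1..<n})" for X
  have code: "row_space k n (sys_matrix k X) =
      row_space (fst (T X)) n (gab_matrix q (fst (key X)) (gnorm (snd (key X))))" if "X \<in> S" for X
    using T[OF that] gab_normal[OF assms(2), of n "snd (snd (T X))" "fst (T X)" "fst (snd (T X))"] q2 n0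
    unfolding key_def by simp
  have inj: "inj_on key S"
  proof (rule inj_onI)
    fix X Y assume X: "X \<in> S" and Y: "Y \<in> S" and e: "key X = key Y"
    have XM: "X \<in> matrices k (n - k)" and YM: "Y \<in> matrices k (n - k)" using X Y S_def by auto
    let ?M = "gab_matrix q (fst (key Y)) (gnorm (snd (key Y)))"
    have cX: "row_space k n (sys_matrix k X) = row_space (fst (T X)) n ?M" using code[OF X] e by simp
    have cY: "row_space k n (sys_matrix k Y) = row_space (fst (T Y)) n ?M" using code[OF Y] by simp
    show "X = Y"
    proof (cases "fst (T X) \<le> fst (T Y)")
      case True
      have "row_space k n (sys_matrix k X) \<subseteq> row_space k n (sys_matrix k Y)"
        unfolding cX cY by (rule row_space_mono[OF True])
      then show ?thesis by (rule sys_unique[OF XM YM assms(5)])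
    next
      case False
      then have "fst (T Y) \<le> fst (T X)" by simp
      have "row_space k n (sys_matrix k Y) \<subseteq> row_space k n (sys_matrix k X)"
        unfolding cX cY by (rule row_space_mono) fact
      then show ?thesis by (rule sys_unique[OF YM XM assms(5), symmetric])
    qed
  qed
  define T1 where "T1 = {r. r < m \<and> coprime r m}"
  define T2 where "T2 = PiE {1..<n} (\<lambda>_. (UNIV :: 'a set))"
  have sub: "key ` S \<subseteq> T1 \<times> T2"
  proof
    fix z assume "z \<in> key ` S"
    then obtain X where X: "X \<in> S" and z: "z = key X" by blast
    show "z \<in> T1 \<times> T2" using T[OF X] m0 unfolding z key_def T1_def T2_def by simp
  qed
  have fin: "finite (T1 \<times> T2)" unfolding T1_def T2_def by (auto intro!: finite_PiE)
  have cS: "card S \<le> card (T1 \<times> T2)" by (rule card_inj_on_le[OF inj sub fin])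
  have "T1 = totatives m"
  proof -
    have "\<not> coprime 0 m" "\<not> coprime m m" using assms(3) by auto
    then show ?thesis unfolding T1_def totatives_def
      by (auto simp: order.order_iff_strict) (rule gr0I, auto)
  qed
  then have cT1: "card T1 = totient m" by (simp add: totient_def)
  have cT2: "card T2 = Q ^ (n - 1)" unfolding T2_def Q_def by (simp add: card_PiE)
  have cS2: "card S \<le> totient m * Q ^ (n - 1)" using cS cT1 cT2 by (simp add: card_cartesian_product)
  have cM: "card (matrices k (n - k) :: (nat \<Rightarrow> nat \<Rightarrow> 'a) set) = Q ^ (k * (n - k))"
    unfolding Q_def by (rule card_matrices)
  define E where "E = (m - 1) * (n - k - 1) * (k - 1)"
  have Qq: "Q = q ^ m" using assms(2) Q_def by simp
  have ex: "q ^ (m * (n - 1)) * q ^ E \<le> q ^ (m * k * (n - k))"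
  proof -
    have "q ^ (m * (n - 1)) * q ^ E = q ^ (m * (n - 1) + E)" by (simp add: power_add)
    also have "\<dots> \<le> q ^ (m * k * (n - k))"
      using exp_ineq[OF assms(4,5), of m] q2 unfolding E_def by (intro power_increasing) auto
    finally show ?thesis .
  qed
  have Qpos: "real Q ^ (k * (n - k)) > 0" using Qq q2 by simp
  have qE: "real q ^ E > 0" using q2 by simp
  have "real (card S) * real q ^ E \<le> real (totient m) * real Q ^ (n - 1) * real q ^ E"
    using cS2 qE by (intro mult_right_mono) (simp_all flip: of_nat_mult of_nat_power)
  also have "\<dots> = real (totient m) * (real q ^ (m * (n - 1)) * real q ^ E)"
    by (simp add: Qq power_mult)
  also have "\<dots> \<le> real (totient m) * real q ^ (m * k * (n - k))"
  proof -
    have "real (q ^ (m * (n - 1)) * q ^ E) \<le> real (q ^ (m * k * (n - k)))" using ex by linarith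
    then show ?thesis by (intro mult_left_mono) simp_all
  qed
  also have "\<dots> = real (totient m) * real Q ^ (k * (n - k))"
    by (simp add: Qq power_mult mult.assoc)
  finally have key_ineq: "real (card S) * real q ^ E \<le> real (totient m) * real Q ^ (k * (n - k))" .
  have "real (card S) / real Q ^ (k * (n - k)) \<le> real (totient m) / real q ^ E"
    using key_ineq Qpos qE by (simp add: divide_simps)
  then show ?thesis unfolding S_def[symmetric] E_def[symmetric] using cM by simp
qed

end
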